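(* Let $X\subset\mathbb{P}^N$ be a projective variety such that $\operatorname{Hrk}_X(p)<\infty$ for every $p\in\mathbb{P}^N$. Then $X$ is strongly concise, i.e. for every $i\in\{0,\ldots,N\}$, $(X\cap H_i)\not\subset\bigcup_{j\ne i}H_j$.
   Context: Work in $\mathbb{P}^N$ over $\mathbb{C}$ with coordinates $x_0,\dots,x_N$; $H_i=\{x_i=0\}$. Hadamard product: $(p_0:\cdots:p_N)\star(q_0:\cdots:q_N)=(p_0q_0:\cdots:p_Nq_N)$, defined when not all $p_iq_i$ vanish. $\operatorname{Hrk}_X(q)=\min\{m\mid q=p_1\star\cdots\star p_m,\ p_i\in X\}$, or $\infty$ if no such decomposition exists. *)

theory Defs
  imports Complex_Main "HOL-Library.Poly_Mapping" "HOL-Library.Extended_Nat"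
begin

text \<open>Points of P^N are represented by nonzero coordinate vectors x_0..x_N
 (functions nat => complex vanishing beyond N); projective sets are the
 corresponding cones of nonzero vectors.\<close>

type_synonym cvec = "nat \<Rightarrow> complex"

definition pvecs :: "nat \<Rightarrow> cvec set" where
  "pvecs N = {x. (\<forall>i>N. x i = 0) \<and> (\<exists>i\<le>N. x i \<noteq> 0)}"

definition proportional :: "cvec \<Rightarrow> cvec \<Rightarrow> bool" where
  "proportional p q \<longleftrightarrow> (\<exists>c. c \<noteq> 0 \<and> p = (\<lambda>i. c * q i))"

type_synonym cpoly = "(nat \<Rightarrow>\<^sub>0 nat) \<Rightarrow>\<^sub>0 complex"

definition mpoly_eval :: "cpoly \<Rightarrow> cvec \<Rightarrow> complex" where
  "mpoly_eval f x = (\<Sum>mon\<in>Poly_Mapping.keys f. Poly_Mapping.lookup f mon * (\<Prod>v\<in>Poly_Mapping.keys mon. x v ^ Poly_Mapping.lookup mon v))"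

definition homog_poly :: "nat \<Rightarrow> cpoly \<Rightarrow> bool" where
  "homog_poly N f \<longleftrightarrow> (\<forall>mon\<in>Poly_Mapping.keys f. Poly_Mapping.keys mon \<subseteq> {..N}) \<and>
     (\<exists>d. \<forall>mon\<in>Poly_Mapping.keys f. (\<Sum>v\<in>Poly_Mapping.keys mon. Poly_Mapping.lookup mon v) = d)"

definition proj_zero_set :: "nat \<Rightarrow> cpoly set \<Rightarrow> cvec set" where
  "proj_zero_set N F = {x \<in> pvecs N. \<forall>f\<in>F. mpoly_eval f x = 0}"

definition proj_closed :: "nat \<Rightarrow> cvec set \<Rightarrow> bool" where
  "proj_closed N X \<longleftrightarrow> (\<exists>F. (\<forall>f\<in>F. homog_poly N f) \<and> X = proj_zero_set N F)"

definition proj_variety :: "nat \<Rightarrow> cvec set \<Rightarrow> bool" where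
  "proj_variety N X \<longleftrightarrow> proj_closed N X \<and> X \<noteq> {} \<and>
     (\<forall>Y Z. proj_closed N Y \<and> proj_closed N Z \<and> X = Y \<union> Z \<longrightarrow> X = Y \<or> X = Z)"

definition hadamard :: "cvec \<Rightarrow> cvec \<Rightarrow> cvec" where
  "hadamard p q = (\<lambda>i. p i * q i)"

definition hadamard_list :: "cvec list \<Rightarrow> cvec" where
  "hadamard_list ps = foldr hadamard ps (\<lambda>_. 1)"

text \<open>Hadamard rank; Inf of the empty set of enat is infinity.  Since q is a
 nonzero vector, proportionality forces the product to be defined (nonzero).\<close>
definition Hrk :: "cvec set \<Rightarrow> cvec \<Rightarrow> enat" where
  "Hrk X q = (INF m \<in> {m. m \<ge> 1 \<and> (\<exists>ps. length ps = m \<and> set ps \<subseteq> X \<and>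
       proportional q (hadamard_list ps))}. enat m)"

definition coord_hyp :: "nat \<Rightarrow> nat \<Rightarrow> cvec set" where
  "coord_hyp N i = {x \<in> pvecs N. x i = 0}"

end

theory Submission
  imports Defs
begin

lemma hl_apply: "hadamard_list ps j = prod_list (map (\<lambda>q. q j) ps)"
  by (induction ps) (auto simp: hadamard_list_def hadamard_def)

lemma X_sub: "proj_variety N X \<Longrightarrow> X \<subseteq> pvecs N"
  unfolding proj_variety_def proj_closed_def proj_zero_set_def by auto

theorem mainTheorem4:
  fixes N :: nat and X :: "cvec set"
  assumes "N \<ge> 1"
    and "proj_variety N X"
    and "\<forall>p\<in>pvecs N. Hrk X p < \<infinity>"
  shows "\<forall>i\<le>N. \<not> (X \<inter> coord_hyp N i \<subseteq> (\<Union>j\<in>{..N} - {i}. coord_hyp N j))"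
proof (intro allI impI)
  fix i assume i: "i \<le> N"
  define p :: cvec where "p = (\<lambda>j. if j \<le> N \<and> j \<noteq> i then 1 else 0)"
  have "p \<in> pvecs N"
  proof -
    obtain j where "j \<le> N" "j \<noteq> i"
    proof (cases "i = 0")
      case True then show ?thesis using that[of 1] assms(1) by simp
    next
      case False then show ?thesis using that[of 0] by simp
    qed
    then show ?thesis unfolding pvecs_def p_def by auto
  qed
  then have "Hrk X p < \<infinity>" using assms(3) by blast
  then have "{m. m \<ge> 1 \<and> (\<exists>ps. length ps = m \<and> set ps \<subseteq> X \<and>
       proportional p (hadamard_list ps))} \<noteq> {}"
    unfolding Hrk_def by (metis INF_empty top_enat_def less_irrefl)
  then obtain m ps where ps: "length ps = m" "set ps \<subseteq> X" "proportional p (hadamard_list ps)"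
    by blast
  then obtain c where c: "c \<noteq> 0" "p = (\<lambda>j. c * hadamard_list ps j)"
    unfolding proportional_def by blast
  have "p i = c * hadamard_list ps i" using c(2) by simp
  moreover have "p i = 0" by (simp add: p_def)
  ultimately have "hadamard_list ps i = 0" using c(1) by simp
  then obtain q where q: "q \<in> set ps" "q i = 0"
    by (auto simp: hl_apply prod_list_zero_iff)
  have nz: "q j \<noteq> 0" if "j \<le> N" "j \<noteq> i" for j
  proof -
    have "p j = c * hadamard_list ps j" using c(2) by simp
    moreover have "p j = 1" using that by (simp add: p_def)
    ultimately have "hadamard_list ps j \<noteq> 0" by auto
    then show ?thesis using q(1) by (auto simp: hl_apply prod_list_zero_iff)
  qed
  have "q \<in> X" using q ps by blast
  then have "q \<in> pvecs N" using X_sub[OF assms(2)] by blast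
  then have "q \<in> X \<inter> coord_hyp N i" using \<open>q \<in> X\<close> q by (simp add: coord_hyp_def)
  moreover have "q \<notin> (\<Union>j\<in>{..N} - {i}. coord_hyp N j)" using nz by (auto simp: coord_hyp_def)
  ultimately show "\<not> (X \<inter> coord_hyp N i \<subseteq> (\<Union>j\<in>{..N} - {i}. coord_hyp N j))" by blast
qed

end
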